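(* Fix $q\in(2,4]$ and $\vartheta>0$. Any arclength parametrized (hence length one) injective regular closed curve $\Gamma\in W^{2,2}(\mathbb{R}/\mathbb{Z},\mathbb{R}^3)$ which is a critical point of $S_\vartheta$ satisfies $$DE_\vartheta(\Gamma)+\lambda\,D\mathscr{L}(\Gamma)=0$$ with Lagrange multiplier $\lambda:=E_\vartheta(\Gamma)$. Moreover, any arclength parametrized curve $\Gamma$ which is critical for the problem of minimizing $E_\vartheta$ on $\mathscr{C}(\mathcal{K})$ (for a knot class $\mathcal{K}$) satisfies the same equation with the same $\lambda=E_\vartheta(\Gamma)$.
   Context: $\mathscr{L}$ is length; $E(\gamma)=\int_\gamma\kappa^2ds$; $\mathrm{TP}_q(\gamma)=\iint_{(\mathbb{R}/\mathbb{Z})^2} r_{tp}(\gamma(s),\gamma(t))^{-q}|\gamma'(s)||\gamma'(t)|\,ds\,dt$ with $r_{tp}(\gamma(s),\gamma(t))$ the radius of the circle through $\gamma(s),\gamma(t)$ tangent to $\gamma$ at $\gamma(s)$; $E_\vartheta=E+\vartheta\mathrm{TP}_q^{1/(q-2)}$, $S_\vartheta=\mathscr{L}\cdot E_\vartheta$; these are continuously differentiable on the open subset of $W^{2,2}(\mathbb{R}/\mathbb{Z},\mathbb{R}^3)$ of injective regular closed curves, with Fréchet derivatives $D$ acting on $h\in W^{2,2}(\mathbb{R}/\mathbb{Z},\mathbb{R}^3)$. $\mathscr{C}(\mathcal{K})=\{\gamma\in W^{2,2}(\mathbb{R}/\mathbb{Z},\mathbb{R}^3):\mathscr{L}(\gamma)=1,|\gamma'|>0,\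 \gamma\text{ embedded of knot type }\mathcal{K}\}$; critical for the constrained problem means $DE_\vartheta(\Gamma)+\mu D\mathscr{L}(\Gamma)=0$ for some $\mu\in\mathbb{R}$. *)

theory Defs
  imports "HOL-Analysis.Analysis"
begin

type_synonym curve = "real \<Rightarrow> real^3"

text \<open>Closed curves are 1-periodic maps on the real line (i.e. maps on R/Z).\<close>

definition d1 :: "curve \<Rightarrow> real \<Rightarrow> real^3" where
  "d1 \<gamma> t = vector_derivative \<gamma> (at t)"

definition d2 :: "curve \<Rightarrow> real \<Rightarrow> real^3" where
  "d2 \<gamma> t = vector_derivative (d1 \<gamma>) (at t)"

definition W22 :: "curve set" where
  "W22 = {\<gamma>. (\<forall>t. \<gamma> (t + 1) = \<gamma> t)
      \<and> (\<forall>t. \<gamma> differentiable (at t))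
      \<and> (\<exists>g. g absolutely_integrable_on {0..1}
             \<and> (\<lambda>t. (norm (g t))\<^sup>2) integrable_on {0..1}
             \<and> (\<forall>t\<in>{0..1}. d1 \<gamma> t = d1 \<gamma> 0 + integral {0..t} g))}"

definition W22_norm :: "curve \<Rightarrow> real" where
  "W22_norm h = sqrt (integral {0..1}
      (\<lambda>t. (norm (h t))\<^sup>2 + (norm (d1 h t))\<^sup>2 + (norm (d2 h t))\<^sup>2))"

definition has_frechet_W22 :: "(curve \<Rightarrow> real) \<Rightarrow> curve \<Rightarrow> (curve \<Rightarrow> real) \<Rightarrow> bool" where
  "has_frechet_W22 F \<gamma> A \<longleftrightarrow>
     (\<forall>h\<in>W22. \<forall>k\<in>W22. \<forall>a b. A (\<lambda>t. a *\<^sub>R h t + b *\<^sub>R k t) = a * A h + b * A k)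
     \<and> (\<exists>C. \<forall>h\<in>W22. \<bar>A h\<bar> \<le> C * W22_norm h)
     \<and> (\<forall>\<epsilon>>0. \<exists>\<delta>>0. \<forall>h\<in>W22. W22_norm h < \<delta> \<longrightarrow>
           \<bar>F (\<lambda>t. \<gamma> t + h t) - F \<gamma> - A h\<bar> \<le> \<epsilon> * W22_norm h)"

definition frechet_differentiable_W22 :: "(curve \<Rightarrow> real) \<Rightarrow> curve \<Rightarrow> bool" where
  "frechet_differentiable_W22 F \<gamma> \<longleftrightarrow> (\<exists>A. has_frechet_W22 F \<gamma> A)"

text \<open>The Frechet derivative DF(\<gamma>) (meaningful on W22 when F is differentiable at \<gamma>).\<close>
definition FD :: "(curve \<Rightarrow> real) \<Rightarrow> curve \<Rightarrow> curve \<Rightarrow> real" where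
  "FD F \<gamma> = (SOME A. has_frechet_W22 F \<gamma> A)"

definition injective_regular_closed :: "curve \<Rightarrow> bool" where
  "injective_regular_closed \<gamma> \<longleftrightarrow> \<gamma> \<in> W22 \<and> inj_on \<gamma> {0..<1} \<and> (\<forall>t. norm (d1 \<gamma> t) > 0)"

definition arclength_param :: "curve \<Rightarrow> bool" where
  "arclength_param \<gamma> \<longleftrightarrow> (\<forall>t. norm (d1 \<gamma> t) = 1)"

definition curve_length :: "curve \<Rightarrow> real" where
  "curve_length \<gamma> = integral {0..1} (\<lambda>t. norm (d1 \<gamma> t))"

text \<open>Bending energy: integral of kappa^2 ds, with kappa = |g' x g''| / |g'|^3.\<close>
definition bending :: "curve \<Rightarrow> real" where
  "bending \<gamma> = integral {0..1}
     (\<lambda>t. (norm (cross3 (d1 \<gamma> t) (d2 \<gamma> t)) / norm (d1 \<gamma> t) ^ 3)\<^sup>2 * norm (d1 \<gamma> t))"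

definition inv_rtp :: "curve \<Rightarrow> real \<Rightarrow> real \<Rightarrow> real" where
  "inv_rtp \<gamma> s t = 2 * norm (cross3 (d1 \<gamma> s) (\<gamma> t - \<gamma> s))
                      / (norm (d1 \<gamma> s) * (norm (\<gamma> t - \<gamma> s))\<^sup>2)"

definition tangent_point :: "real \<Rightarrow> curve \<Rightarrow> real" where
  "tangent_point q \<gamma> = integral (cbox (0,0) (1,1))
     (\<lambda>(s,t). (inv_rtp \<gamma> s t) powr q * norm (d1 \<gamma> s) * norm (d1 \<gamma> t))"

definition E_theta :: "real \<Rightarrow> real \<Rightarrow> curve \<Rightarrow> real" where
  "E_theta q \<theta> \<gamma> = bending \<gamma> + \<theta> * (tangent_point q \<gamma>) powr (1 / (q - 2))"

definition S_theta :: "real \<Rightarrow> real \<Rightarrow> curve \<Rightarrow> real" where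
  "S_theta q \<theta> \<gamma> = curve_length \<gamma> * E_theta q \<theta> \<gamma>"

text \<open>The admissible class C(K); a knot class K is represented as a set of curves.\<close>
definition admissible_class :: "curve set \<Rightarrow> curve set" where
  "admissible_class K = {\<gamma>. injective_regular_closed \<gamma> \<and> curve_length \<gamma> = 1 \<and> \<gamma> \<in> K}"

end

theory Submission
  imports Defs
begin

lemma LD_Fdiff:
  fixes f :: "real \<Rightarrow> 'a::euclidean_space"
  assumes f: "f integrable_on {a..b}" and x: "x \<in> {a..b}" and y: "y \<in> {a..b}" and xy: "x \<le> y"
  shows "integral {a..y} f - integral {a..x} f = integral {x..y} f"
proof -
  have fy: "f integrable_on {a..y}" by (rule integrable_on_subinterval[OF f]) (use y in auto)
  have "integral {a..x} f + integral {x..y} f = integral {a..y} f"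
    by (rule Henstock_Kurzweil_Integration.integral_combine[OF _ _ fy]) (use x xy in auto)
  then show ?thesis by (simp add: algebra_simps)
qed

lemma LD_term:
  fixes f :: "real \<Rightarrow> 'a::euclidean_space"
  assumes f: "f integrable_on {a..b}" and x: "x \<in> {a..b}" and y: "y \<in> {a..b}"
  shows "norm (Henstock_Kurzweil_Integration.content {min x y..max x y} *\<^sub>R f x - integral {min x y..max x y} f)
       = norm (integral {a..y} f - integral {a..x} f - (y - x) *\<^sub>R f x)"
proof (cases "x \<le> y")
  case True
  then show ?thesis using LD_Fdiff[OF f x y True]
    by (simp add: norm_minus_commute)
next
  case False
  then have "y \<le> x" by simp
  then show ?thesis using LD_Fdiff[OF f y x] False x y
    by (simp add: algebra_simps norm_minus_commute)
qed

lemma LD: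
  fixes f :: "real \<Rightarrow> 'a::euclidean_space"
  assumes f: "f integrable_on {a..b}"
  shows "\<exists>N. negligible N \<and> (\<forall>x\<in>{a<..<b} - N. ((\<lambda>x. integral {a..x} f) has_vector_derivative f x) (at x))"
proof -
  define F where "F x = integral {a..x} f" for x
  define S where "S n = {x\<in>{a<..<b}. \<forall>d>0. \<exists>y\<in>{a..b}. 0 < \<bar>y - x\<bar> \<and> \<bar>y - x\<bar> < d \<and>
      norm (F y - F x - (y - x) *\<^sub>R f x) > \<bar>y - x\<bar> / real (Suc n)}" for n :: nat
  have negS: "negligible (S n)" for n
  proof -
    define \<eta> where "\<eta> = 1 / real (Suc n)"
    have eta: "\<eta> > 0" by (simp add: \<eta>_def)
    show ?thesis unfolding negligible_outer_le
    proof (intro allI impI)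
      fix e :: real assume e: "e > 0"
      have fc: "f integrable_on cbox a b" using f by simp
      obtain \<gamma> where g: "gauge \<gamma>" and hs: "\<And>p. \<lbrakk>p tagged_partial_division_of cbox a b; \<gamma> fine p\<rbrakk> \<Longrightarrow>
           (\<Sum>(x,k)\<in>p. norm (Henstock_Kurzweil_Integration.content k *\<^sub>R f x - integral k f)) < e * \<eta> / 2"
        using Henstock_lemma[OF fc, of "e * \<eta> / 2"] e eta by auto
      define K where "K = {(x,y). x \<in> S n \<and> y \<in> {a..b} \<and> 0 < \<bar>y - x\<bar> \<and> cball x \<bar>y - x\<bar> \<subseteq> \<gamma> x \<and>
           norm (F y - F x - (y - x) *\<^sub>R f x) > \<eta> * \<bar>y - x\<bar>}"
      define r where "r = (\<lambda>(x::real,y::real). \<bar>y - x\<bar>)"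
      have cov: "\<exists>i. i \<in> K \<and> x \<in> ball (fst i) (r i) \<and> r i < d" if "x \<in> S n" "d > 0" for x d
      proof -
        obtain \<rho> where rho: "\<rho> > 0" "ball x \<rho> \<subseteq> \<gamma> x"
          using g unfolding gauge_def by (meson open_contains_ball)
        from that obtain y where y: "y \<in> {a..b}" "0 < \<bar>y - x\<bar>" "\<bar>y - x\<bar> < min d \<rho>"
          "norm (F y - F x - (y - x) *\<^sub>R f x) > \<bar>y - x\<bar> / real (Suc n)"
          unfolding S_def using rho(1) by (smt (verit, del_insts) mem_Collect_eq)
        have "cball x \<bar>y - x\<bar> \<subseteq> ball x \<rho>" using y(3) by (auto simp: dist_real_def)
        then have "(x, y) \<in> K" using y that(1) rho(2) unfolding K_def \<eta>_def by auto
        then show ?thesis using y by (intro exI[of _ "(x,y)"]) (auto simp: r_def dist_real_def)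
      qed
      obtain C where C: "countable C" "C \<subseteq> K"
        and pw: "pairwise (\<lambda>i j. disjnt (ball (fst i) (r i)) (ball (fst j) (r j))) C"
        and neg: "negligible (S n - (\<Union>i\<in>C. ball (fst i) (r i)))"
        using Vitali_covering_theorem_balls[of "S n" K fst r] cov by blast
      have fin: "measure lebesgue (\<Union>i\<in>C'. ball (fst i) (r i)) \<le> e" if C': "C' \<subseteq> C" "finite C'" for C'
      proof -
        define I where "I i = {min (fst i) (snd i) .. max (fst i) (snd i)}" for i :: "real \<times> real"
        define p where "p = (\<lambda>i. (fst i, I i)) ` C'"
        have inK: "i \<in> K" if "i \<in> C'" for i using that C' C by auto
        have rpos: "r i > 0" if "i \<in> C'" for i using inK[OF that] by (auto simp: K_def r_def)
        have inj: "inj_on (\<lambda>i. (fst i, I i)) C'"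
        proof (rule inj_onI)
          fix i j assume ij: "i \<in> C'" "j \<in> C'" "(fst i, I i) = (fst j, I j)"
          show "i = j"
          proof (rule ccontr)
            assume "i \<noteq> j"
            then have "disjnt (ball (fst i) (r i)) (ball (fst j) (r j))"
              using pw ij C' unfolding pairwise_def by blast
            moreover have "fst i = fst j" using ij(3) by simp
            moreover have "fst i \<in> ball (fst i) (r i)" using rpos ij by auto
            moreover have "fst j \<in> ball (fst j) (r j)" using rpos ij by auto
            ultimately show False unfolding disjnt_def by (metis disjoint_iff)
          qed
        qed
        have Isub: "I i \<subseteq> cball (fst i) (r i)" for i
          by (auto simp: I_def r_def dist_real_def split: prod.splits)
        have intI: "interior (I i) \<subseteq> ball (fst i) (r i)" for i
          by (auto simp: I_def r_def dist_real_def split: prod.splits)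
        have tpd: "p tagged_partial_division_of cbox a b"
          unfolding tagged_partial_division_of_def
        proof (intro conjI allI impI)
          show "finite p" using C' by (simp add: p_def)
        next
          fix x k assume "(x, k) \<in> p"
          then obtain i where i: "i \<in> C'" "x = fst i" "k = I i" by (auto simp: p_def)
          then have "fst i \<in> S n" "snd i \<in> {a..b}" using inK[OF i(1)] by (auto simp: K_def)
          then have "fst i \<in> {a..b}" by (auto simp: S_def)
          then show "x \<in> k" "k \<subseteq> cbox a b" "\<exists>a b. k = cbox a b"
            using i \<open>snd i \<in> {a..b}\<close> by (auto simp: I_def)
        next
          fix x1 k1 x2 k2 assume a: "(x1, k1) \<in> p \<and> (x2, k2) \<in> p \<and> (x1, k1) \<noteq> (x2, k2)"
          then obtain i j where i: "i \<in> C'" "x1 = fst i" "k1 = I i" and j: "j \<in> C'" "x2 = fst j" "k2 = I j"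
            by (auto simp: p_def)
          then have "i \<noteq> j" using a by auto
          then have "disjnt (ball (fst i) (r i)) (ball (fst j) (r j))"
            using pw i j C' unfolding pairwise_def by blast
          then show "interior k1 \<inter> interior k2 = {}"
            using intI[of i] intI[of j] i j by (auto simp: disjnt_def)
        qed
        have fine: "\<gamma> fine p"
          unfolding fine_def
        proof (intro ballI)
          fix xk assume "xk \<in> p"
          then obtain i where i: "i \<in> C'" "xk = (fst i, I i)" by (auto simp: p_def)
          then have "cball (fst i) (r i) \<subseteq> \<gamma> (fst i)" using inK[OF i(1)]
            by (auto simp: K_def r_def)
          then show "case xk of (x, k) \<Rightarrow> k \<subseteq> \<gamma> x" using Isub[of i] i by auto
        qed
        have termb: "\<eta> * r i \<le> norm (Henstock_Kurzweil_Integration.content (I i) *\<^sub>R f (fst i) - integral (I i) f)" if "i \<in> C'" for i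
        proof -
          obtain x y where i: "i = (x, y)" by fastforce
          have "x \<in> S n" "y \<in> {a..b}" "norm (F y - F x - (y - x) *\<^sub>R f x) > \<eta> * \<bar>y - x\<bar>"
            using inK[OF that] by (auto simp: K_def i)
          moreover have "x \<in> {a..b}" using \<open>x \<in> S n\<close> by (auto simp: S_def)
          ultimately show ?thesis using LD_term[OF f, of x y]
            by (simp add: i I_def r_def F_def)
        qed
        have "\<eta> * (\<Sum>i\<in>C'. r i) = (\<Sum>i\<in>C'. \<eta> * r i)" by (simp add: sum_distrib_left)
        also have "\<dots> \<le> (\<Sum>i\<in>C'. norm (Henstock_Kurzweil_Integration.content (I i) *\<^sub>R f (fst i) - integral (I i) f))"
          by (rule sum_mono) (rule termb)
        also have "\<dots> = (\<Sum>(x,k)\<in>p. norm (Henstock_Kurzweil_Integration.content k *\<^sub>R f x - integral k f))"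
          unfolding p_def by (subst sum.reindex[OF inj]) auto
        also have "\<dots> < e * \<eta> / 2" using hs[OF tpd fine] .
        finally have "(\<Sum>i\<in>C'. r i) \<le> e / 2" using eta by (simp add: field_simps)
        moreover have "measure lebesgue (\<Union>i\<in>C'. ball (fst i) (r i)) \<le> (\<Sum>i\<in>C'. measure lebesgue (ball (fst i) (r i)))"
          by (rule measure_UNION_le) (use C' in auto)
        moreover have "measure lebesgue (ball (fst i) (r i)) = 2 * r i" if "i \<in> C'" for i
          using rpos[OF that] by (simp add: ball_eq_greaterThanLessThan)
        ultimately show ?thesis by (simp add: sum_distrib_left[symmetric])
      qed
      define U where "U = (\<Union>i\<in>C. ball (fst i) (r i))"
      have Um: "U \<in> lmeasurable" unfolding U_def
        by (rule fmeasurable_UN_bound[OF C(1) _ fin]) auto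
      have Ume: "measure lebesgue U \<le> e" unfolding U_def
        by (rule measure_UN_bound[OF C(1) _ fin]) auto
      have Nm: "S n - U \<in> lmeasurable" using neg negligible_imp_measurable by (simp add: U_def)
      have N0: "measure lebesgue (S n - U) = 0" using neg negligible_imp_measure0 by (simp add: U_def)
      show "\<exists>T. S n \<subseteq> T \<and> T \<in> lmeasurable \<and> measure lebesgue T \<le> e"
      proof (intro exI conjI)
        show "S n \<subseteq> (S n - U) \<union> U" by auto
        show "(S n - U) \<union> U \<in> lmeasurable" using Nm Um by (rule fmeasurable.Un)
        have "measure lebesgue ((S n - U) \<union> U) \<le> measure lebesgue (S n - U) + measure lebesgue U"
          by (rule measure_Un_le) (use Nm Um in auto)
        then show "measure lebesgue ((S n - U) \<union> U) \<le> e" using N0 Ume by simp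
      qed
    qed
  qed
  have der: "(F has_vector_derivative f x) (at x)" if x: "x \<in> {a<..<b}" "x \<notin> (\<Union>n. S n)" for x
    unfolding has_vector_derivative_def has_derivative_at_alt
  proof (intro conjI allI impI)
    show "bounded_linear (\<lambda>h. h *\<^sub>R f x)" by (rule bounded_linear_scaleR_left)
    fix e :: real assume e: "e > 0"
    obtain n where n: "inverse (real (Suc n)) < e"
      using reals_Archimedean[OF e] by auto
    have "x \<notin> S n" using x by auto
    then have "\<exists>d>0. \<forall>y\<in>{a..b}. 0 < \<bar>y - x\<bar> \<and> \<bar>y - x\<bar> < d \<longrightarrow>
        norm (F y - F x - (y - x) *\<^sub>R f x) \<le> \<bar>y - x\<bar> / real (Suc n)"
      using x(1) unfolding S_def by (force simp: not_less)
    then obtain d where d: "d > 0" and dd0: "\<forall>y\<in>{a..b}. 0 < \<bar>y - x\<bar> \<and> \<bar>y - x\<bar> < d \<longrightarrow>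
        norm (F y - F x - (y - x) *\<^sub>R f x) \<le> \<bar>y - x\<bar> / real (Suc n)" by blast
    have dd: "norm (F y - F x - (y - x) *\<^sub>R f x) \<le> \<bar>y - x\<bar> / real (Suc n)"
      if "y \<in> {a..b}" "0 < \<bar>y - x\<bar>" "\<bar>y - x\<bar> < d" for y using dd0 that by blast
    show "\<exists>d>0. \<forall>y. norm (y - x) < d \<longrightarrow> norm (F y - F x - (y - x) *\<^sub>R f x) \<le> e * norm (y - x)"
    proof (intro exI conjI allI impI)
      show "min d (min (x - a) (b - x)) > 0" using d x by auto
      fix y assume y: "norm (y - x) < min d (min (x - a) (b - x))"
      show "norm (F y - F x - (y - x) *\<^sub>R f x) \<le> e * norm (y - x)"
      proof (cases "y = x")
        case True then show ?thesis by simp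
      next
        case False
        then have "y \<in> {a..b}" "0 < \<bar>y - x\<bar>" "\<bar>y - x\<bar> < d" using y by auto
        then have "norm (F y - F x - (y - x) *\<^sub>R f x) \<le> \<bar>y - x\<bar> / real (Suc n)" by (rule dd)
        also have "\<dots> \<le> e * \<bar>y - x\<bar>" using n \<open>0 < \<bar>y - x\<bar>\<close>
          by (simp add: divide_simps inverse_eq_divide)
        finally show ?thesis by simp
      qed
    qed
  qed
  show ?thesis
  proof (intro exI conjI ballI)
    show "negligible (\<Union>n. S n)" by (rule negligible_Union_nat) (rule negS)
    fix x assume "x \<in> {a<..<b} - (\<Union>n. S n)"
    then show "((\<lambda>x. integral {a..x} f) has_vector_derivative f x) (at x)"
      using der unfolding F_def by auto
  qed
qed

lemma hvd_scale: "(g has_vector_derivative g') F \<Longrightarrow> ((\<lambda>x. c *\<^sub>R g x) has_vector_derivative c *\<^sub>R g') F"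
  by (rule bounded_linear.has_vector_derivative[OF bounded_linear_scaleR_right])

lemma W22_periodic: "h \<in> W22 \<Longrightarrow> h (t + 1) = h t"
  by (simp add: W22_def)

lemma W22_diff: "h \<in> W22 \<Longrightarrow> h differentiable (at t)"
  by (simp add: W22_def)

lemma d1_has: "h differentiable (at t) \<Longrightarrow> (h has_vector_derivative d1 h t) (at t)"
  unfolding d1_def by (simp add: vector_derivative_works[symmetric])

lemma d1_lin:
  assumes "\<And>t. h differentiable (at t)" "\<And>t. k differentiable (at t)"
  shows "d1 (\<lambda>x. a *\<^sub>R h x + b *\<^sub>R k x) = (\<lambda>x. a *\<^sub>R d1 h x + b *\<^sub>R d1 k x)"
proof
  fix t
  have "((\<lambda>x. a *\<^sub>R h x + b *\<^sub>R k x) has_vector_derivative a *\<^sub>R d1 h t + b *\<^sub>R d1 k t) (at t)"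
    by (intro has_vector_derivative_add hvd_scale d1_has assms)
  then show "d1 (\<lambda>x. a *\<^sub>R h x + b *\<^sub>R k x) t = a *\<^sub>R d1 h t + b *\<^sub>R d1 k t"
    unfolding d1_def by (rule vector_derivative_at)
qed

lemma d1_scale:
  assumes "\<And>t. h differentiable (at t)"
  shows "d1 (\<lambda>x. c *\<^sub>R h x) = (\<lambda>x. c *\<^sub>R d1 h x)"
proof
  fix t
  have "((\<lambda>x. c *\<^sub>R h x) has_vector_derivative c *\<^sub>R d1 h t) (at t)"
    by (intro hvd_scale d1_has assms)
  then show "d1 (\<lambda>x. c *\<^sub>R h x) t = c *\<^sub>R d1 h t"
    unfolding d1_def by (rule vector_derivative_at)
qed

lemma d1_add:
  assumes "\<And>t. h differentiable (at t)" "\<And>t. k differentiable (at t)"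
  shows "d1 (\<lambda>x. h x + k x) = (\<lambda>x. d1 h x + d1 k x)"
proof
  fix t
  have "((\<lambda>x. h x + k x) has_vector_derivative d1 h t + d1 k t) (at t)"
    by (intro has_vector_derivative_add d1_has assms)
  then show "d1 (\<lambda>x. h x + k x) t = d1 h t + d1 k t"
    unfolding d1_def by (rule vector_derivative_at)
qed

lemma W22_ae:
  assumes h: "h \<in> W22"
  obtains g N where "negligible N" "(\<lambda>t. (norm (g t))\<^sup>2) integrable_on {0..1}"
    "\<And>t. t \<in> {0..1} - N \<Longrightarrow> (d1 h has_vector_derivative g t) (at t)"
    "continuous_on {0..1} (d1 h)"
proof -
  obtain g where ga: "g absolutely_integrable_on {0..1}" and g2: "(\<lambda>t. (norm (g t))\<^sup>2) integrable_on {0..1}"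
    and rep: "\<forall>t\<in>{0..1}. d1 h t = d1 h 0 + integral {0..t} g"
    using h unfolding W22_def by blast
  have rep': "\<And>y. y \<in> {0..1} \<Longrightarrow> d1 h 0 + integral {0..y} g = d1 h y"
    using rep by metis
  have gi: "g integrable_on {0..1}" using ga by (rule set_lebesgue_integral_eq_integral(1))
  obtain N0 where N0: "negligible N0"
    and der: "\<And>x. x \<in> {0<..<1} - N0 \<Longrightarrow> ((\<lambda>x. integral {0..x} g) has_vector_derivative g x) (at x)"
    using LD[OF gi] by blast
  define N where "N = N0 \<union> {0, 1}"
  have "negligible N" unfolding N_def using N0 by (simp add: negligible_Un)
  moreover have "(d1 h has_vector_derivative g t) (at t)" if t: "t \<in> {0..1} - N" for t
  proof -
    have t': "t \<in> {0<..<1} - N0" using t by (auto simp: N_def)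
    have "((\<lambda>x. d1 h 0 + integral {0..x} g) has_vector_derivative 0 + g t) (at t)"
      by (intro has_vector_derivative_add has_vector_derivative_const der[OF t'])
    then have "((\<lambda>x. d1 h 0 + integral {0..x} g) has_vector_derivative g t) (at t)" by simp
    moreover have "open {0<..<(1::real)}" by simp
    moreover have "t \<in> {0<..<1}" using t' by simp
    moreover have "\<And>y. y \<in> {0<..<1} \<Longrightarrow> d1 h 0 + integral {0..y} g = d1 h y" using rep' by auto
    ultimately show ?thesis by (rule has_vector_derivative_transform_within_open)
  qed
  moreover have "continuous_on {0..1} (d1 h)"
  proof -
    have "continuous_on {0..1} (\<lambda>x. d1 h 0 + integral {0..x} g)"
      by (intro continuous_intros indefinite_integral_continuous_1 gi)
    then show ?thesis by (rule continuous_on_eq) (use rep' in auto)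
  qed
  ultimately show ?thesis using that g2 by blast
qed

definition W22_int :: "curve \<Rightarrow> real \<Rightarrow> real" where
  "W22_int h t = (norm (h t))\<^sup>2 + (norm (d1 h t))\<^sup>2 + (norm (d2 h t))\<^sup>2"

lemma W22_norm_alt: "W22_norm h = sqrt (integral {0..1} (W22_int h))"
  unfolding W22_norm_def W22_int_def by simp

lemma integral_nonneg_any:
  fixes f :: "'a::euclidean_space \<Rightarrow> real"
  assumes "\<And>x. x \<in> S \<Longrightarrow> 0 \<le> f x" shows "0 \<le> integral S f"
  by (cases "f integrable_on S") (auto intro: integral_nonneg assms simp: not_integrable_integral)

lemma W22_norm_nonneg: "0 \<le> W22_norm h"
  unfolding W22_norm_def by (simp add: integral_nonneg_any)

lemma d2_scale_ae:
  assumes h: "\<And>t. h differentiable (at t)" and g: "(d1 h has_vector_derivative g) (at t)"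
  shows "d2 (\<lambda>x. c *\<^sub>R h x) t = c *\<^sub>R g"
proof -
  have "d1 (\<lambda>x. c *\<^sub>R h x) = (\<lambda>x. c *\<^sub>R d1 h x)" by (rule d1_scale[OF h])
  moreover have "((\<lambda>x. c *\<^sub>R d1 h x) has_vector_derivative c *\<^sub>R g) (at t)" by (rule hvd_scale[OF g])
  ultimately show ?thesis unfolding d2_def by (simp add: vector_derivative_at)
qed

lemma d2_ae:
  assumes h: "\<And>t. h differentiable (at t)" and g: "(d1 h has_vector_derivative g) (at t)"
  shows "d2 h t = g"
  using d2_scale_ae[OF h g, of 1] by simp

lemma W22_scale:
  assumes h: "h \<in> W22" shows "(\<lambda>x. c *\<^sub>R h x) \<in> W22"
proof -
  obtain g where ga: "g absolutely_integrable_on {0..1}" and g2: "(\<lambda>t. (norm (g t))\<^sup>2) integrable_on {0..1}"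
    and rep: "\<forall>t\<in>{0..1}. d1 h t = d1 h 0 + integral {0..t} g"
    using h unfolding W22_def by blast
  have hd: "\<And>t. h differentiable (at t)" using h by (rule W22_diff)
  have A1: "(\<lambda>t. c *\<^sub>R g t) absolutely_integrable_on {0..1}"
    using ga by (simp add: absolutely_integrable_on_scaleR_iff)
  have A2: "(\<lambda>t. (norm (c *\<^sub>R g t))\<^sup>2) integrable_on {0..1}"
  proof -
    have "(\<lambda>t. (norm (c *\<^sub>R g t))\<^sup>2) = (\<lambda>t. c\<^sup>2 *\<^sub>R (norm (g t))\<^sup>2)"
      by (simp add: fun_eq_iff power2_eq_square)
    then show ?thesis using integrable_cmul[OF g2, of "c\<^sup>2"] by simp
  qed
  have A3: "\<forall>t\<in>{0..1}. d1 (\<lambda>x. c *\<^sub>R h x) t = d1 (\<lambda>x. c *\<^sub>R h x) 0 + integral {0..t} (\<lambda>t. c *\<^sub>R g t)"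
  proof
    fix t :: real assume t: "t \<in> {0..1}"
    have e: "d1 h t = d1 h 0 + integral {0..t} g" using rep t by blast
    show "d1 (\<lambda>x. c *\<^sub>R h x) t = d1 (\<lambda>x. c *\<^sub>R h x) 0 + integral {0..t} (\<lambda>t. c *\<^sub>R g t)"
      unfolding d1_scale[OF hd] e by (simp add: scaleR_add_right)
  qed
  show ?thesis unfolding W22_def mem_Collect_eq
  proof (intro conjI)
    show "\<forall>t. c *\<^sub>R h (t + 1) = c *\<^sub>R h t" using h by (simp add: W22_periodic)
    show "\<forall>t. (\<lambda>x. c *\<^sub>R h x) differentiable (at t)"
    proof
      fix t show "(\<lambda>x. c *\<^sub>R h x) differentiable (at t)"
        by (rule differentiableI_vector[OF hvd_scale[OF d1_has[OF hd]]])
    qed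
    show "\<exists>g. g absolutely_integrable_on {0..1} \<and> (\<lambda>t. (norm (g t))\<^sup>2) integrable_on {0..1} \<and>
        (\<forall>t\<in>{0..1}. d1 (\<lambda>x. c *\<^sub>R h x) t = d1 (\<lambda>x. c *\<^sub>R h x) 0 + integral {0..t} g)"
      by (rule exI[of _ "\<lambda>t. c *\<^sub>R g t"]) (intro conjI A1 A2 A3)
  qed
qed

lemma W22_cont: "h \<in> W22 \<Longrightarrow> continuous_on S h"
  by (intro continuous_at_imp_continuous_on ballI differentiable_imp_continuous_within W22_diff)

lemma W22_d1_cont: "h \<in> W22 \<Longrightarrow> continuous_on {0..1} (d1 h)"
  by (erule W22_ae) auto

lemma W22_int_ae:
  assumes h: "h \<in> W22"
  obtains g N where "negligible N" "(\<lambda>t. (norm (g t))\<^sup>2) integrable_on {0..1}"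
    "\<And>t. t \<in> {0..1} - N \<Longrightarrow> (d1 h has_vector_derivative g t) (at t)"
    "\<And>t. t \<in> {0..1} - N \<Longrightarrow> d2 h t = g t"
    "W22_int h integrable_on {0..1}"
proof -
  obtain g N where N: "negligible N" and g2: "(\<lambda>t. (norm (g t))\<^sup>2) integrable_on {0..1}"
    and der: "\<And>t. t \<in> {0..1} - N \<Longrightarrow> (d1 h has_vector_derivative g t) (at t)"
    and c: "continuous_on {0..1} (d1 h)"
    using W22_ae[OF h] by blast
  have hd: "\<And>t. h differentiable (at t)" using h by (rule W22_diff)
  have d2: "d2 h t = g t" if "t \<in> {0..1} - N" for t by (rule d2_ae[OF hd der[OF that]])
  have "(\<lambda>t. (norm (h t))\<^sup>2 + (norm (d1 h t))\<^sup>2) integrable_on {0..1}"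
    by (intro integrable_continuous_interval continuous_intros W22_cont[OF h] c)
  then have "(\<lambda>t. (norm (h t))\<^sup>2 + (norm (d1 h t))\<^sup>2 + (norm (g t))\<^sup>2) integrable_on {0..1}"
    by (rule integrable_add[OF _ g2])
  then have int: "W22_int h integrable_on {0..1}"
    by (rule integrable_spike[OF _ N]) (simp add: W22_int_def d2)
  show ?thesis by (rule that[OF N g2 der d2 int])
qed

lemma norm_sq_scale: "(norm (c *\<^sub>R (v::real^3)))\<^sup>2 = c\<^sup>2 * (norm v)\<^sup>2"
  unfolding norm_scaleR power_mult_distrib by simp

lemma W22_norm_sq: "h \<in> W22 \<Longrightarrow> (W22_norm h)\<^sup>2 = integral {0..1} (W22_int h)"
  unfolding W22_norm_alt
  by (rule real_sqrt_pow2) (rule integral_nonneg_any, simp add: W22_int_def)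

lemma W22_d1_sq_le:
  assumes h: "h \<in> W22"
  shows "integral {0..1} (\<lambda>t. (norm (d1 h t))\<^sup>2) \<le> (W22_norm h)\<^sup>2"
proof -
  obtain N g where N: "negligible N" and g2: "(\<lambda>t. (norm (g t))\<^sup>2) integrable_on {0..1}"
    and der: "\<And>t. t \<in> {0..1} - N \<Longrightarrow> (d1 h has_vector_derivative g t) (at t)"
    and d2: "\<And>t. t \<in> {0..1} - N \<Longrightarrow> d2 h t = g t"
    and int: "W22_int h integrable_on {0..1}"
    by (rule W22_int_ae[OF h]) blast
  note int
  moreover have "(\<lambda>t. (norm (d1 h t))\<^sup>2) integrable_on {0..1}"
    by (intro integrable_continuous_interval continuous_intros W22_d1_cont[OF h])
  ultimately show ?thesis unfolding W22_norm_sq[OF h]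
    by (intro Henstock_Kurzweil_Integration.integral_le) (auto simp: W22_int_def)
qed

lemma W22_norm_scale:
  assumes h: "h \<in> W22"
  shows "W22_norm (\<lambda>x. c *\<^sub>R h x) = \<bar>c\<bar> * W22_norm h"
proof -
  obtain N g where N: "negligible N" and g2: "(\<lambda>t. (norm (g t))\<^sup>2) integrable_on {0..1}"
    and der: "\<And>t. t \<in> {0..1} - N \<Longrightarrow> (d1 h has_vector_derivative g t) (at t)"
    and d2: "\<And>t. t \<in> {0..1} - N \<Longrightarrow> d2 h t = g t"
    and int: "W22_int h integrable_on {0..1}"
    by (rule W22_int_ae[OF h]) blast
  have hd: "\<And>t. h differentiable (at t)" using h by (rule W22_diff)
  have "integral {0..1} (W22_int (\<lambda>x. c *\<^sub>R h x)) = integral {0..1} (\<lambda>t. c\<^sup>2 * W22_int h t)"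
  proof (rule integral_spike[OF N, symmetric])
    fix t assume t: "t \<in> {0..1} - N"
    show "W22_int (\<lambda>x. c *\<^sub>R h x) t = c\<^sup>2 * W22_int h t"
      unfolding W22_int_def d1_scale[OF hd] d2_scale_ae[OF hd der[OF t]] d2[OF t] norm_sq_scale
      by (simp only: distrib_left)
  qed
  also have "\<dots> = c\<^sup>2 * integral {0..1} (W22_int h)"
    by (rule Henstock_Kurzweil_Integration.integral_mult_right)
  finally have eq: "integral {0..1} (W22_int (\<lambda>x. c *\<^sub>R h x)) = c\<^sup>2 * integral {0..1} (W22_int h)" .
  show ?thesis by (simp only: W22_norm_alt eq real_sqrt_mult real_sqrt_abs)
qed

lemma frechetD:
  assumes "has_frechet_W22 F \<gamma> A" "\<epsilon> > 0"
  obtains \<delta> where "\<delta> > 0" "\<And>h. h \<in> W22 \<Longrightarrow> W22_norm h < \<delta> \<Longrightarrow>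
      \<bar>F (\<lambda>t. \<gamma> t + h t) - F \<gamma> - A h\<bar> \<le> \<epsilon> * W22_norm h"
  using assms unfolding has_frechet_W22_def by meson

lemma frechet_bound:
  assumes "has_frechet_W22 F \<gamma> A"
  obtains C where "C \<ge> 0" "\<And>h. h \<in> W22 \<Longrightarrow> \<bar>A h\<bar> \<le> C * W22_norm h"
proof -
  obtain C where C: "\<And>h. h \<in> W22 \<Longrightarrow> \<bar>A h\<bar> \<le> C * W22_norm h"
    using assms unfolding has_frechet_W22_def by meson
  have "\<bar>A h\<bar> \<le> \<bar>C\<bar> * W22_norm h" if "h \<in> W22" for h
  proof -
    have "C * W22_norm h \<le> \<bar>C\<bar> * W22_norm h"
      by (intro mult_right_mono W22_norm_nonneg) simp
    then show ?thesis using C[OF that] by linarith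
  qed
  then show ?thesis using that[of "\<bar>C\<bar>"] by simp
qed

lemma frechet_lin:
  assumes "has_frechet_W22 F \<gamma> A" "h \<in> W22" "k \<in> W22"
  shows "A (\<lambda>t. a *\<^sub>R h t + b *\<^sub>R k t) = a * A h + b * A k"
  using assms unfolding has_frechet_W22_def by blast

lemma frechet_hom:
  assumes "has_frechet_W22 F \<gamma> A" "h \<in> W22"
  shows "A (\<lambda>x. s *\<^sub>R h x) = s * A h"
  using frechet_lin[OF assms assms(2), of s 0] by simp

lemma frechet_zero_norm:
  assumes "has_frechet_W22 F \<gamma> A" "h \<in> W22" "W22_norm h = 0"
  shows "A h = 0"
proof -
  obtain C where "\<And>h. h \<in> W22 \<Longrightarrow> \<bar>A h\<bar> \<le> C * W22_norm h"
    using frechet_bound[OF assms(1)] by blast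
  from this[OF assms(2)] assms(3) show ?thesis by simp
qed

lemma frechet_unique:
  assumes A1: "has_frechet_W22 F \<gamma> A1" and A2: "has_frechet_W22 F \<gamma> A2" and h: "h \<in> W22"
  shows "A1 h = A2 h"
proof (cases "W22_norm h = 0")
  case True
  then show ?thesis using frechet_zero_norm[OF A1 h] frechet_zero_norm[OF A2 h] by simp
next
  case False
  define n where "n = W22_norm h"
  have n: "n > 0" using False W22_norm_nonneg[of h] unfolding n_def by linarith
  show ?thesis
  proof (rule ccontr)
    assume ne: "A1 h \<noteq> A2 h"
    define D where "D = \<bar>A1 h - A2 h\<bar>"
    have D: "D > 0" using ne unfolding D_def by simp
    define \<epsilon> where "\<epsilon> = D / (4 * n)"
    have \<epsilon>: "\<epsilon> > 0" using D n unfolding \<epsilon>_def by simp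
    obtain \<delta>1 where d1: "\<delta>1 > 0" and r1: "\<And>k. k \<in> W22 \<Longrightarrow> W22_norm k < \<delta>1 \<Longrightarrow>
      \<bar>F (\<lambda>t. \<gamma> t + k t) - F \<gamma> - A1 k\<bar> \<le> \<epsilon> * W22_norm k"
      using frechetD[OF A1 \<epsilon>] by blast
    obtain \<delta>2 where d2: "\<delta>2 > 0" and r2: "\<And>k. k \<in> W22 \<Longrightarrow> W22_norm k < \<delta>2 \<Longrightarrow>
      \<bar>F (\<lambda>t. \<gamma> t + k t) - F \<gamma> - A2 k\<bar> \<le> \<epsilon> * W22_norm k"
      using frechetD[OF A2 \<epsilon>] by blast
    define s where "s = min \<delta>1 \<delta>2 / (2 * n)"
    have s: "s > 0" using d1 d2 n unfolding s_def by simp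
    define k where "k = (\<lambda>x. s *\<^sub>R h x)"
    have k: "k \<in> W22" unfolding k_def by (rule W22_scale[OF h])
    have kn: "W22_norm k = s * n" using W22_norm_scale[OF h, of s] s unfolding k_def n_def by simp
    have sn: "s * n = min \<delta>1 \<delta>2 / 2" using n unfolding s_def by simp
    have "W22_norm k < \<delta>1" "W22_norm k < \<delta>2" unfolding kn sn using d1 d2 by linarith+
    then have R1: "\<bar>F (\<lambda>t. \<gamma> t + k t) - F \<gamma> - A1 k\<bar> \<le> \<epsilon> * (s * n)"
      and R2: "\<bar>F (\<lambda>t. \<gamma> t + k t) - F \<gamma> - A2 k\<bar> \<le> \<epsilon> * (s * n)"
      using r1[OF k] r2[OF k] kn by auto
    have "A1 k = s * A1 h" "A2 k = s * A2 h"
      unfolding k_def by (rule frechet_hom[OF A1 h], rule frechet_hom[OF A2 h])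
    then have "s * D = \<bar>A1 k - A2 k\<bar>" using s unfolding D_def
      by (simp add: abs_mult right_diff_distrib[symmetric])
    also have "\<dots> \<le> 2 * (\<epsilon> * (s * n))" using R1 R2 by linarith
    also have "\<dots> = s * (D / 2)" using n unfolding \<epsilon>_def by (simp add: field_simps)
    finally have "D \<le> D / 2" using s by simp
    then show False using D by simp
  qed
qed


lemma frechet_mult:
  assumes FA: "has_frechet_W22 F \<gamma> A" and GB: "has_frechet_W22 G \<gamma> B"
  shows "has_frechet_W22 (\<lambda>c. F c * G c) \<gamma> (\<lambda>h. A h * G \<gamma> + F \<gamma> * B h)"
  unfolding has_frechet_W22_def
proof (intro conjI)
  show "\<forall>h\<in>W22. \<forall>k\<in>W22. \<forall>a b. A (\<lambda>t. a *\<^sub>R h t + b *\<^sub>R k t) * G \<gamma> + F \<gamma> * B (\<lambda>t. a *\<^sub>R h t + b *\<^sub>R k t)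
      = a * (A h * G \<gamma> + F \<gamma> * B h) + b * (A k * G \<gamma> + F \<gamma> * B k)"
    by (simp add: frechet_lin[OF FA] frechet_lin[OF GB] algebra_simps)
  obtain CA where CA: "CA \<ge> 0" "\<And>h. h \<in> W22 \<Longrightarrow> \<bar>A h\<bar> \<le> CA * W22_norm h"
    using frechet_bound[OF FA] by blast
  obtain CB where CB: "CB \<ge> 0" "\<And>h. h \<in> W22 \<Longrightarrow> \<bar>B h\<bar> \<le> CB * W22_norm h"
    using frechet_bound[OF GB] by blast
  show "\<exists>C. \<forall>h\<in>W22. \<bar>A h * G \<gamma> + F \<gamma> * B h\<bar> \<le> C * W22_norm h"
  proof (intro exI ballI)
    fix h assume h: "h \<in> W22"
    have "\<bar>A h * G \<gamma> + F \<gamma> * B h\<bar> \<le> \<bar>A h\<bar> * \<bar>G \<gamma>\<bar> + \<bar>F \<gamma>\<bar> * \<bar>B h\<bar>"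
      by (metis abs_mult abs_triangle_ineq)
    also have "\<dots> \<le> (CA * W22_norm h) * \<bar>G \<gamma>\<bar> + \<bar>F \<gamma>\<bar> * (CB * W22_norm h)"
      by (intro add_mono mult_right_mono mult_left_mono CA(2)[OF h] CB(2)[OF h]) auto
    also have "\<dots> = (CA * \<bar>G \<gamma>\<bar> + \<bar>F \<gamma>\<bar> * CB) * W22_norm h" by (simp add: algebra_simps)
    finally show "\<bar>A h * G \<gamma> + F \<gamma> * B h\<bar> \<le> (CA * \<bar>G \<gamma>\<bar> + \<bar>F \<gamma>\<bar> * CB) * W22_norm h" .
  qed
  show "\<forall>\<epsilon>>0. \<exists>\<delta>>0. \<forall>h\<in>W22. W22_norm h < \<delta> \<longrightarrow>
      \<bar>F (\<lambda>t. \<gamma> t + h t) * G (\<lambda>t. \<gamma> t + h t) - F \<gamma> * G \<gamma> - (A h * G \<gamma> + F \<gamma> * B h)\<bar> \<le> \<epsilon> * W22_norm h"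
  proof (intro allI impI)
    fix \<epsilon> :: real assume e: "\<epsilon> > 0"
    define PA where "PA = CA + 1"
    define PB where "PB = CB + 1"
    have PA: "PA > 0" "PA \<ge> 1" and PB: "PB > 0" "PB \<ge> 1" using CA CB unfolding PA_def PB_def by auto
    obtain da1 where da1: "da1 > 0" and ra1: "\<And>h. h \<in> W22 \<Longrightarrow> W22_norm h < da1 \<Longrightarrow>
        \<bar>F (\<lambda>t. \<gamma> t + h t) - F \<gamma> - A h\<bar> \<le> 1 * W22_norm h"
      using frechetD[OF FA, of 1] by auto
    obtain db1 where db1: "db1 > 0" and rb1: "\<And>h. h \<in> W22 \<Longrightarrow> W22_norm h < db1 \<Longrightarrow>
        \<bar>G (\<lambda>t. \<gamma> t + h t) - G \<gamma> - B h\<bar> \<le> 1 * W22_norm h"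
      using frechetD[OF GB, of 1] by auto
    define eF where "eF = \<epsilon> / (3 * (\<bar>G \<gamma>\<bar> + 1))"
    define eG where "eG = \<epsilon> / (3 * (\<bar>F \<gamma>\<bar> + 1))"
    have eF: "eF > 0" and eG: "eG > 0" using e unfolding eF_def eG_def by auto
    obtain da2 where da2: "da2 > 0" and ra2: "\<And>h. h \<in> W22 \<Longrightarrow> W22_norm h < da2 \<Longrightarrow>
        \<bar>F (\<lambda>t. \<gamma> t + h t) - F \<gamma> - A h\<bar> \<le> eF * W22_norm h"
      using frechetD[OF FA eF] by auto
    obtain db2 where db2: "db2 > 0" and rb2: "\<And>h. h \<in> W22 \<Longrightarrow> W22_norm h < db2 \<Longrightarrow>
        \<bar>G (\<lambda>t. \<gamma> t + h t) - G \<gamma> - B h\<bar> \<le> eG * W22_norm h"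
      using frechetD[OF GB eG] by auto
    define d3 where "d3 = \<epsilon> / (3 * PA * PB)"
    have d3: "d3 > 0" using e PA PB unfolding d3_def by simp
    define \<delta> where "\<delta> = min (min da1 db1) (min (min da2 db2) d3)"
    have \<delta>: "\<delta> > 0" using da1 db1 da2 db2 d3 unfolding \<delta>_def by simp
    show "\<exists>\<delta>>0. \<forall>h\<in>W22. W22_norm h < \<delta> \<longrightarrow>
      \<bar>F (\<lambda>t. \<gamma> t + h t) * G (\<lambda>t. \<gamma> t + h t) - F \<gamma> * G \<gamma> - (A h * G \<gamma> + F \<gamma> * B h)\<bar> \<le> \<epsilon> * W22_norm h"
    proof (intro exI conjI ballI impI)
      show "\<delta> > 0" by (rule \<delta>)
      fix h assume h: "h \<in> W22" and hn: "W22_norm h < \<delta>"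
      define n where "n = W22_norm h"
      have n0: "n \<ge> 0" unfolding n_def by (rule W22_norm_nonneg)
      have lt: "n < da1" "n < db1" "n < da2" "n < db2" "n < d3" using hn unfolding n_def \<delta>_def by auto
      define F1 where "F1 = F (\<lambda>t. \<gamma> t + h t)"
      define G1 where "G1 = G (\<lambda>t. \<gamma> t + h t)"
      define RF where "RF = F1 - F \<gamma> - A h"
      define RG where "RG = G1 - G \<gamma> - B h"
      have rf1: "\<bar>RF\<bar> \<le> n" using ra1[OF h] lt unfolding RF_def F1_def n_def by simp
      have rg1: "\<bar>RG\<bar> \<le> n" using rb1[OF h] lt unfolding RG_def G1_def n_def by simp
      have rf2: "\<bar>RF\<bar> \<le> eF * n" using ra2[OF h] lt unfolding RF_def F1_def n_def by simp
      have rg2: "\<bar>RG\<bar> \<le> eG * n" using rb2[OF h] lt unfolding RG_def G1_def n_def by simp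
      have dF: "\<bar>F1 - F \<gamma>\<bar> \<le> PA * n"
      proof -
        have "\<bar>A h\<bar> \<le> CA * n" using CA(2)[OF h] unfolding n_def .
        then show ?thesis using rf1 unfolding RF_def PA_def by (simp add: algebra_simps)
      qed
      have dG: "\<bar>G1 - G \<gamma>\<bar> \<le> PB * n"
      proof -
        have "\<bar>B h\<bar> \<le> CB * n" using CB(2)[OF h] unfolding n_def .
        then show ?thesis using rg1 unfolding RG_def PB_def by (simp add: algebra_simps)
      qed
      have ident: "F1 * G1 - F \<gamma> * G \<gamma> - (A h * G \<gamma> + F \<gamma> * B h) = RF * G \<gamma> + F \<gamma> * RG + (F1 - F \<gamma>) * (G1 - G \<gamma>)"
        unfolding RF_def RG_def by (simp add: algebra_simps)
      have t1: "\<bar>RF * G \<gamma>\<bar> \<le> \<epsilon> * n / 3"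
      proof -
        have "\<bar>RF * G \<gamma>\<bar> \<le> eF * n * (\<bar>G \<gamma>\<bar> + 1)"
          unfolding abs_mult by (rule mult_mono) (use rf2 eF n0 in auto)
        also have "\<dots> = \<epsilon> * n / 3" unfolding eF_def by (simp add: field_simps)
        finally show ?thesis .
      qed
      have t2: "\<bar>F \<gamma> * RG\<bar> \<le> \<epsilon> * n / 3"
      proof -
        have "\<bar>F \<gamma> * RG\<bar> \<le> (\<bar>F \<gamma>\<bar> + 1) * (eG * n)"
          unfolding abs_mult by (rule mult_mono) (use rg2 eG n0 in auto)
        also have "\<dots> = \<epsilon> * n / 3" unfolding eG_def by (simp add: field_simps)
        finally show ?thesis .
      qed
      have t3: "\<bar>(F1 - F \<gamma>) * (G1 - G \<gamma>)\<bar> \<le> \<epsilon> * n / 3"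
      proof -
        have "\<bar>(F1 - F \<gamma>) * (G1 - G \<gamma>)\<bar> \<le> (PA * n) * (PB * n)"
          unfolding abs_mult by (rule mult_mono) (use dF dG PA PB n0 in auto)
        also have "\<dots> = (PA * PB * n) * n" by (simp add: algebra_simps)
        also have "\<dots> \<le> (PA * PB * d3) * n"
          using lt(5) PA PB n0 by (intro mult_right_mono mult_left_mono) auto
        also have "\<dots> = \<epsilon> * n / 3" unfolding d3_def using PA PB by (simp add: field_simps)
        finally show ?thesis .
      qed
      have "\<bar>F1 * G1 - F \<gamma> * G \<gamma> - (A h * G \<gamma> + F \<gamma> * B h)\<bar> \<le> \<epsilon> * n"
        unfolding ident using t1 t2 t3 by linarith
      then show "\<bar>F (\<lambda>t. \<gamma> t + h t) * G (\<lambda>t. \<gamma> t + h t) - F \<gamma> * G \<gamma> - (A h * G \<gamma> + F \<gamma> * B h)\<bar> \<le> \<epsilon> * W22_norm h"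
        unfolding F1_def G1_def n_def .
    qed
  qed
qed

lemma frechet_dir:
  assumes FA: "has_frechet_W22 F \<gamma> A" and g: "\<gamma> \<in> W22"
    and K: "\<And>t. \<bar>t\<bar> < 1/2 \<Longrightarrow> \<bar>F (\<lambda>x. \<gamma> x + t *\<^sub>R \<gamma> x) - F \<gamma> - t * b\<bar> \<le> K * t\<^sup>2"
  shows "A \<gamma> = b"
proof (rule ccontr)
  assume ne: "A \<gamma> \<noteq> b"
  define n where "n = W22_norm \<gamma>"
  have n0: "n \<ge> 0" unfolding n_def by (rule W22_norm_nonneg)
  define D where "D = \<bar>A \<gamma> - b\<bar>"
  have D: "D > 0" using ne unfolding D_def by simp
  define \<epsilon> where "\<epsilon> = D / (2 * (n + 1))"
  have e: "\<epsilon> > 0" using D n0 unfolding \<epsilon>_def by simp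
  obtain \<delta> where d: "\<delta> > 0" and r: "\<And>h. h \<in> W22 \<Longrightarrow> W22_norm h < \<delta> \<Longrightarrow>
      \<bar>F (\<lambda>t. \<gamma> t + h t) - F \<gamma> - A h\<bar> \<le> \<epsilon> * W22_norm h"
    using frechetD[OF FA e] by blast
  define K' where "K' = \<bar>K\<bar> + 1"
  have K': "K' > 0" unfolding K'_def by simp
  define t where "t = min (1/4) (min (\<delta> / (2 * (n + 1))) (D / (4 * K')))"
  have t: "t > 0" using d D n0 K' unfolding t_def by simp
  have t1: "t \<le> 1/4" unfolding t_def by (rule min.cobounded1)
  have t2: "t \<le> \<delta> / (2 * (n + 1))" unfolding t_def by (meson min.cobounded1 min.cobounded2 order_trans)
  have t3: "t \<le> D / (4 * K')" unfolding t_def by (meson min.cobounded2 order_trans)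
  define h where "h = (\<lambda>x. t *\<^sub>R \<gamma> x)"
  have h: "h \<in> W22" unfolding h_def by (rule W22_scale[OF g])
  have hn: "W22_norm h = t * n" using W22_norm_scale[OF g, of t] t unfolding h_def n_def by simp
  have "t * n \<le> \<delta> / (2 * (n + 1)) * n" using t2 n0 by (rule mult_right_mono)
  also have "\<dots> < \<delta>"
  proof -
    have "n / (2 * (n + 1)) < 1" using n0 by (simp add: field_simps)
    then have "\<delta> * (n / (2 * (n + 1))) < \<delta> * 1" using d by (intro mult_strict_left_mono)
    then show ?thesis by (simp add: field_simps)
  qed
  finally have "W22_norm h < \<delta>" unfolding hn .
  then have R: "\<bar>F (\<lambda>x. \<gamma> x + t *\<^sub>R \<gamma> x) - F \<gamma> - t * A \<gamma>\<bar> \<le> \<epsilon> * (t * n)"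
    using r[OF h] frechet_hom[OF FA g, of t] hn unfolding h_def by simp
  have "\<bar>t\<bar> < 1/2" using t t1 by simp
  then have KK: "\<bar>F (\<lambda>x. \<gamma> x + t *\<^sub>R \<gamma> x) - F \<gamma> - t * b\<bar> \<le> K' * t\<^sup>2"
    using K[of t] unfolding K'_def by (smt (verit) mult_right_mono zero_le_power2)
  have "t * D = \<bar>t * A \<gamma> - t * b\<bar>" using t unfolding D_def by (simp add: abs_mult right_diff_distrib[symmetric])
  also have "\<dots> \<le> \<epsilon> * (t * n) + K' * t\<^sup>2" using R KK by linarith
  finally have "t * D \<le> t * (\<epsilon> * n + K' * t)" by (simp add: algebra_simps power2_eq_square)
  then have DD: "D \<le> \<epsilon> * n + K' * t" using t by simp
  have "\<epsilon> * n \<le> D / 2" unfolding \<epsilon>_def using D n0 by (simp add: field_simps)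
  moreover have "K' * t \<le> D / 4" using t3 K' by (simp add: field_simps)
  ultimately show False using DD D by linarith
qed


lemma length_pointwise:
  fixes a b :: "real^3"
  assumes a: "norm a = 1"
  shows "\<bar>norm (a + b) - 1 - a \<bullet> b\<bar> \<le> (norm b)\<^sup>2 / 2"
proof -
  define x where "x = a \<bullet> b"
  define y where "y = norm b"
  have y0: "y \<ge> 0" unfolding y_def by simp
  have xy: "\<bar>x\<bar> \<le> y" unfolding x_def y_def using Cauchy_Schwarz_ineq2[of a b] a by simp
  have aa: "a \<bullet> a = 1" using a by (simp add: dot_square_norm)
  have sq: "(norm (a + b))\<^sup>2 = 1 + 2 * x + y\<^sup>2"
    unfolding power2_norm_eq_inner x_def y_def
    by (simp add: inner_add_left inner_add_right inner_commute aa)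
  have low: "1 + x \<le> norm (a + b)"
  proof -
    have "a \<bullet> (a + b) \<le> norm a * norm (a + b)" using Cauchy_Schwarz_ineq2[of a "a + b"] by linarith
    then show ?thesis using a aa unfolding x_def by (simp add: inner_add_right)
  qed
  have pos: "0 \<le> 1 + x + y\<^sup>2 / 2"
  proof -
    have "0 \<le> ((y - 1)\<^sup>2 + 1) / 2" by simp
    also have "\<dots> = 1 - y + y\<^sup>2 / 2" by (simp add: power2_eq_square field_simps)
    also have "\<dots> \<le> 1 + x + y\<^sup>2 / 2" using xy by linarith
    finally show ?thesis .
  qed
  have "(norm (a + b))\<^sup>2 \<le> (1 + x + y\<^sup>2 / 2)\<^sup>2"
  proof -
    have "(1 + x + y\<^sup>2 / 2)\<^sup>2 = 1 + 2 * x + y\<^sup>2 + (x + y\<^sup>2 / 2)\<^sup>2"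
      by (simp add: power2_eq_square field_simps)
    then show ?thesis unfolding sq by simp
  qed
  then have up: "norm (a + b) \<le> 1 + x + y\<^sup>2 / 2" using pos by (rule power2_le_imp_le)
  show ?thesis using low up unfolding x_def[symmetric] y_def[symmetric] by linarith
qed

lemma int_norm_d1_le:
  assumes h: "h \<in> W22"
  shows "integral {0..1} (\<lambda>t. norm (d1 h t)) \<le> W22_norm h"
proof -
  define X where "X = integral {0..1} (\<lambda>t. norm (d1 h t))"
  define Q where "Q = integral {0..1} (\<lambda>t. (norm (d1 h t))\<^sup>2)"
  define n where "n = W22_norm h"
  have n0: "n \<ge> 0" unfolding n_def by (rule W22_norm_nonneg)
  have Qn: "Q \<le> n\<^sup>2" unfolding Q_def n_def by (rule W22_d1_sq_le[OF h])
  have c: "continuous_on {0..1} (d1 h)" by (rule W22_d1_cont[OF h])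
  have key: "2 * d * X \<le> d\<^sup>2 + Q" if d: "d > 0" for d
  proof -
    have i1: "(\<lambda>t. 2 * d * norm (d1 h t)) integrable_on {0..1}"
      by (intro integrable_continuous_interval continuous_intros c)
    have i2: "(\<lambda>t. d\<^sup>2 + (norm (d1 h t))\<^sup>2) integrable_on {0..1}"
      by (intro integrable_continuous_interval continuous_intros c)
    have "integral {0..1} (\<lambda>t. 2 * d * norm (d1 h t)) \<le> integral {0..1} (\<lambda>t. d\<^sup>2 + (norm (d1 h t))\<^sup>2)"
    proof (rule Henstock_Kurzweil_Integration.integral_le[OF i1 i2])
      fix t
      have "0 \<le> (d - norm (d1 h t))\<^sup>2" by simp
      then show "2 * d * norm (d1 h t) \<le> d\<^sup>2 + (norm (d1 h t))\<^sup>2"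
        by (simp add: power2_eq_square algebra_simps)
    qed
    moreover have "integral {0..1} (\<lambda>t. 2 * d * norm (d1 h t)) = 2 * d * X"
      unfolding X_def by (rule Henstock_Kurzweil_Integration.integral_mult_right)
    moreover have "integral {0..1} (\<lambda>t. d\<^sup>2 + (norm (d1 h t))\<^sup>2) = d\<^sup>2 + Q"
    proof -
      have iq: "(\<lambda>t. (norm (d1 h t))\<^sup>2) integrable_on {0..1}"
        by (intro integrable_continuous_interval continuous_intros c)
      have ic: "(\<lambda>t::real. d\<^sup>2) integrable_on {0..1}"
        by (intro integrable_continuous_interval continuous_on_const)
      have "integral {0..1} (\<lambda>t. d\<^sup>2 + (norm (d1 h t))\<^sup>2) = integral {0..1} (\<lambda>t::real. d\<^sup>2) + Q"
        unfolding Q_def by (rule Henstock_Kurzweil_Integration.integral_add[OF ic iq])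
      then show ?thesis by simp
    qed
    ultimately show ?thesis by linarith
  qed
  show ?thesis
  proof (cases "n > 0")
    case True
    have "2 * n * X \<le> n\<^sup>2 + Q" by (rule key[OF True])
    also have "\<dots> \<le> 2 * n * n" using Qn by (simp add: power2_eq_square)
    finally have "X \<le> n" using True by simp
    then show ?thesis unfolding X_def n_def .
  next
    case False
    then have n00: "n = 0" using n0 by simp
    show ?thesis
    proof (rule ccontr)
      assume "\<not> ?thesis"
      then have Xp: "X > 0" unfolding X_def n_def[symmetric] n00 by simp
      have "2 * X * X \<le> X\<^sup>2 + Q" by (rule key[OF Xp])
      then have "X * X \<le> 0" using Qn n00 by (simp add: power2_eq_square)
      then show False using Xp by (simp add: mult_le_0_iff)
    qed
  qed
qed

definition AL :: "curve \<Rightarrow> curve \<Rightarrow> real" where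
  "AL \<Gamma> h = integral {0..1} (\<lambda>t. d1 \<Gamma> t \<bullet> d1 h t)"

lemma length_one:
  assumes "arclength_param \<Gamma>" shows "curve_length \<Gamma> = 1"
  using assms unfolding arclength_param_def curve_length_def by simp

lemma L_frechet:
  assumes G: "\<Gamma> \<in> W22" and al: "arclength_param \<Gamma>"
  shows "has_frechet_W22 curve_length \<Gamma> (AL \<Gamma>)"
  unfolding has_frechet_W22_def
proof (intro conjI)
  have cG: "continuous_on {0..1} (d1 \<Gamma>)" by (rule W22_d1_cont[OF G])
  have n1: "\<And>t. norm (d1 \<Gamma> t) = 1" using al unfolding arclength_param_def by simp
  show "\<forall>h\<in>W22. \<forall>k\<in>W22. \<forall>a b. AL \<Gamma> (\<lambda>t. a *\<^sub>R h t + b *\<^sub>R k t) = a * AL \<Gamma> h + b * AL \<Gamma> k"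
  proof (intro ballI allI)
    fix h k a b assume h: "h \<in> W22" and k: "k \<in> W22"
    have ch: "continuous_on {0..1} (d1 h)" by (rule W22_d1_cont[OF h])
    have ck: "continuous_on {0..1} (d1 k)" by (rule W22_d1_cont[OF k])
    have "AL \<Gamma> (\<lambda>t. a *\<^sub>R h t + b *\<^sub>R k t) = integral {0..1} (\<lambda>t. a * (d1 \<Gamma> t \<bullet> d1 h t) + b * (d1 \<Gamma> t \<bullet> d1 k t))"
      unfolding AL_def d1_lin[OF W22_diff[OF h] W22_diff[OF k]]
      by (simp add: inner_add_right)
    also have "\<dots> = integral {0..1} (\<lambda>t. a * (d1 \<Gamma> t \<bullet> d1 h t)) + integral {0..1} (\<lambda>t. b * (d1 \<Gamma> t \<bullet> d1 k t))"
      by (intro integral_add integrable_continuous_interval continuous_intros cG ch ck)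
    also have "\<dots> = a * AL \<Gamma> h + b * AL \<Gamma> k"
      unfolding AL_def by (simp only: Henstock_Kurzweil_Integration.integral_mult_right)
    finally show "AL \<Gamma> (\<lambda>t. a *\<^sub>R h t + b *\<^sub>R k t) = a * AL \<Gamma> h + b * AL \<Gamma> k" .
  qed
  show "\<exists>C. \<forall>h\<in>W22. \<bar>AL \<Gamma> h\<bar> \<le> C * W22_norm h"
  proof (intro exI ballI)
    fix h assume h: "h \<in> W22"
    have ch: "continuous_on {0..1} (d1 h)" by (rule W22_d1_cont[OF h])
    have "norm (AL \<Gamma> h) \<le> integral {0..1} (\<lambda>t. norm (d1 h t))"
      unfolding AL_def
    proof (rule integral_norm_bound_integral)
      show "(\<lambda>t. d1 \<Gamma> t \<bullet> d1 h t) integrable_on {0..1}"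
        by (intro integrable_continuous_interval continuous_intros cG ch)
      show "(\<lambda>t. norm (d1 h t)) integrable_on {0..1}"
        by (intro integrable_continuous_interval continuous_intros ch)
      fix t
      show "norm (d1 \<Gamma> t \<bullet> d1 h t) \<le> norm (d1 h t)"
        using Cauchy_Schwarz_ineq2[of "d1 \<Gamma> t" "d1 h t"] n1[of t] by simp
    qed
    also have "\<dots> \<le> W22_norm h" by (rule int_norm_d1_le[OF h])
    finally show "\<bar>AL \<Gamma> h\<bar> \<le> 1 * W22_norm h" by simp
  qed
  show "\<forall>\<epsilon>>0. \<exists>\<delta>>0. \<forall>h\<in>W22. W22_norm h < \<delta> \<longrightarrow>
      \<bar>curve_length (\<lambda>t. \<Gamma> t + h t) - curve_length \<Gamma> - AL \<Gamma> h\<bar> \<le> \<epsilon> * W22_norm h"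
  proof (intro allI impI)
    fix \<epsilon> :: real assume e: "\<epsilon> > 0"
    show "\<exists>\<delta>>0. \<forall>h\<in>W22. W22_norm h < \<delta> \<longrightarrow>
      \<bar>curve_length (\<lambda>t. \<Gamma> t + h t) - curve_length \<Gamma> - AL \<Gamma> h\<bar> \<le> \<epsilon> * W22_norm h"
    proof (intro exI conjI ballI impI)
      show "2 * \<epsilon> > 0" using e by simp
      fix h assume h: "h \<in> W22" and hn: "W22_norm h < 2 * \<epsilon>"
      define n where "n = W22_norm h"
      have n0: "n \<ge> 0" unfolding n_def by (rule W22_norm_nonneg)
      have ch: "continuous_on {0..1} (d1 h)" by (rule W22_d1_cont[OF h])
      have i1: "(\<lambda>t. norm (d1 \<Gamma> t + d1 h t)) integrable_on {0..1}"
        by (intro integrable_continuous_interval continuous_intros cG ch)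
      have i2: "(\<lambda>t. d1 \<Gamma> t \<bullet> d1 h t) integrable_on {0..1}"
        by (intro integrable_continuous_interval continuous_intros cG ch)
      have i3: "(\<lambda>t::real. (1::real)) integrable_on {0..1}" by (intro integrable_continuous_interval continuous_on_const)
      have Lh: "curve_length (\<lambda>t. \<Gamma> t + h t) = integral {0..1} (\<lambda>t. norm (d1 \<Gamma> t + d1 h t))"
        unfolding curve_length_def d1_add[OF W22_diff[OF G] W22_diff[OF h]] ..
      have L1: "curve_length \<Gamma> = integral {0..1} (\<lambda>t::real. (1::real))" unfolding curve_length_def n1 ..
      have "curve_length (\<lambda>t. \<Gamma> t + h t) - curve_length \<Gamma> - AL \<Gamma> h
          = integral {0..1} (\<lambda>t. norm (d1 \<Gamma> t + d1 h t) - 1 - d1 \<Gamma> t \<bullet> d1 h t)"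
        unfolding Lh L1 AL_def
        by (simp add: Henstock_Kurzweil_Integration.integral_diff i1 i2 i3 Henstock_Kurzweil_Integration.integrable_diff)
      also have "\<bar>\<dots>\<bar> \<le> integral {0..1} (\<lambda>t. (norm (d1 h t))\<^sup>2 / 2)"
      proof -
        have "norm (integral {0..1} (\<lambda>t. norm (d1 \<Gamma> t + d1 h t) - 1 - d1 \<Gamma> t \<bullet> d1 h t))
            \<le> integral {0..1} (\<lambda>t. (norm (d1 h t))\<^sup>2 / 2)"
        proof (rule integral_norm_bound_integral)
          show "(\<lambda>t. norm (d1 \<Gamma> t + d1 h t) - 1 - d1 \<Gamma> t \<bullet> d1 h t) integrable_on {0..1}"
            by (intro Henstock_Kurzweil_Integration.integrable_diff i1 i2 i3)
          show "(\<lambda>t. (norm (d1 h t))\<^sup>2 / 2) integrable_on {0..1}"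
            by (intro integrable_continuous_interval continuous_intros ch) auto
          fix t
          show "norm (norm (d1 \<Gamma> t + d1 h t) - 1 - d1 \<Gamma> t \<bullet> d1 h t) \<le> (norm (d1 h t))\<^sup>2 / 2"
            using length_pointwise[OF n1[of t], of "d1 h t"] by simp
        qed
        then show ?thesis by simp
      qed
      also have "\<dots> = (1/2) * integral {0..1} (\<lambda>t. (norm (d1 h t))\<^sup>2)"
      proof -
        have eqf: "(\<lambda>t. (norm (d1 h t))\<^sup>2 / 2) = (\<lambda>t. (1/2) * (norm (d1 h t))\<^sup>2)"
          by (simp add: fun_eq_iff)
        show ?thesis unfolding eqf by (rule Henstock_Kurzweil_Integration.integral_mult_right)
      qed
      also have "\<dots> \<le> n\<^sup>2 / 2" using W22_d1_sq_le[OF h] unfolding n_def by simp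
      also have "\<dots> \<le> \<epsilon> * n"
      proof -
        have "n * n \<le> (2 * \<epsilon>) * n" using hn n0 unfolding n_def[symmetric]
          by (intro mult_right_mono) auto
        then show ?thesis by (simp add: power2_eq_square)
      qed
      finally show "\<bar>curve_length (\<lambda>t. \<Gamma> t + h t) - curve_length \<Gamma> - AL \<Gamma> h\<bar> \<le> \<epsilon> * W22_norm h"
        unfolding n_def .
    qed
  qed
qed


lemma L_scale:
  assumes G: "\<Gamma> \<in> W22" and c: "c > 0"
  shows "curve_length (\<lambda>x. c *\<^sub>R \<Gamma> x) = c * curve_length \<Gamma>"
proof -
  have "curve_length (\<lambda>x. c *\<^sub>R \<Gamma> x) = integral {0..1} (\<lambda>t. c * norm (d1 \<Gamma> t))"
    unfolding curve_length_def d1_scale[OF W22_diff[OF G]] using c by simp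
  also have "\<dots> = c * curve_length \<Gamma>"
    unfolding curve_length_def by (rule Henstock_Kurzweil_Integration.integral_mult_right)
  finally show ?thesis .
qed

lemma bend_pt:
  fixes a b :: "real^3"
  assumes c: "c > 0"
  shows "(norm (cross3 (c *\<^sub>R a) (c *\<^sub>R b)) / norm (c *\<^sub>R a) ^ 3)\<^sup>2 * norm (c *\<^sub>R a)
       = (1 / c) * ((norm (cross3 a b) / norm a ^ 3)\<^sup>2 * norm a)"
proof -
  have cr: "norm (cross3 (c *\<^sub>R a) (c *\<^sub>R b)) = c\<^sup>2 * norm (cross3 a b)"
    unfolding cross_mult_left cross_mult_right using c by (simp add: power2_eq_square)
  have na: "norm (c *\<^sub>R a) = c * norm a" using c by simp
  show ?thesis
  proof (cases "norm a = 0")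
    case True then show ?thesis unfolding cr na by simp
  next
    case False
    then have "norm a > 0" by simp
    then show ?thesis unfolding cr na using c by (simp add: field_simps power2_eq_square eval_nat_numeral)
  qed
qed

lemma bending_scale:
  assumes G: "\<Gamma> \<in> W22" and c: "c > 0"
  shows "bending (\<lambda>x. c *\<^sub>R \<Gamma> x) = bending \<Gamma> / c"
proof -
  obtain N g where N: "negligible N" and g2: "(\<lambda>t. (norm (g t))\<^sup>2) integrable_on {0..1}"
    and der: "\<And>t. t \<in> {0..1} - N \<Longrightarrow> (d1 \<Gamma> has_vector_derivative g t) (at t)"
    and d2: "\<And>t. t \<in> {0..1} - N \<Longrightarrow> d2 \<Gamma> t = g t"
    and int: "W22_int \<Gamma> integrable_on {0..1}"
    by (rule W22_int_ae[OF G]) blast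
  have hd: "\<And>t. \<Gamma> differentiable (at t)" using G by (rule W22_diff)
  have "bending (\<lambda>x. c *\<^sub>R \<Gamma> x) = integral {0..1} (\<lambda>t. (1 / c) *
      ((norm (cross3 (d1 \<Gamma> t) (d2 \<Gamma> t)) / norm (d1 \<Gamma> t) ^ 3)\<^sup>2 * norm (d1 \<Gamma> t)))"
    unfolding bending_def
  proof (rule integral_spike[OF N, symmetric])
    fix t assume t: "t \<in> {0..1} - N"
    show "(norm (cross3 (d1 (\<lambda>x. c *\<^sub>R \<Gamma> x) t) (d2 (\<lambda>x. c *\<^sub>R \<Gamma> x) t)) / norm (d1 (\<lambda>x. c *\<^sub>R \<Gamma> x) t) ^ 3)\<^sup>2 *
        norm (d1 (\<lambda>x. c *\<^sub>R \<Gamma> x) t) =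
        (1 / c) * ((norm (cross3 (d1 \<Gamma> t) (d2 \<Gamma> t)) / norm (d1 \<Gamma> t) ^ 3)\<^sup>2 * norm (d1 \<Gamma> t))"
      unfolding d1_scale[OF hd] d2_scale_ae[OF hd der[OF t]] d2[OF t] by (rule bend_pt[OF c])
  qed
  also have "\<dots> = (1 / c) * bending \<Gamma>"
    unfolding bending_def by (rule Henstock_Kurzweil_Integration.integral_mult_right)
  finally show ?thesis by simp
qed

lemma inv_rtp_scale:
  assumes hd: "\<And>t. \<Gamma> differentiable (at t)" and c: "c > 0"
  shows "inv_rtp (\<lambda>x. c *\<^sub>R \<Gamma> x) s t = inv_rtp \<Gamma> s t / c"
proof -
  have e1: "c *\<^sub>R \<Gamma> t - c *\<^sub>R \<Gamma> s = c *\<^sub>R (\<Gamma> t - \<Gamma> s)" by (simp add: scaleR_diff_right)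
  have cr: "norm (cross3 (c *\<^sub>R d1 \<Gamma> s) (c *\<^sub>R (\<Gamma> t - \<Gamma> s))) = c\<^sup>2 * norm (cross3 (d1 \<Gamma> s) (\<Gamma> t - \<Gamma> s))"
    unfolding cross_mult_left cross_mult_right using c by (simp add: power2_eq_square)
  have n1: "norm (c *\<^sub>R d1 \<Gamma> s) = c * norm (d1 \<Gamma> s)" using c by simp
  have n2: "norm (c *\<^sub>R (\<Gamma> t - \<Gamma> s)) = c * norm (\<Gamma> t - \<Gamma> s)" using c by simp
  show ?thesis
    unfolding inv_rtp_def d1_scale[OF hd] e1 cr n1 n2
  proof (cases "norm (d1 \<Gamma> s) = 0 \<or> norm (\<Gamma> t - \<Gamma> s) = 0")
    case True then show "2 * (c\<^sup>2 * norm (cross3 (d1 \<Gamma> s) (\<Gamma> t - \<Gamma> s))) / (c * norm (d1 \<Gamma> s) * (c * norm (\<Gamma> t - \<Gamma> s))\<^sup>2) =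
      2 * norm (cross3 (d1 \<Gamma> s) (\<Gamma> t - \<Gamma> s)) / (norm (d1 \<Gamma> s) * (norm (\<Gamma> t - \<Gamma> s))\<^sup>2) / c"
      by auto
  next
    case False
    then have "norm (d1 \<Gamma> s) > 0" "norm (\<Gamma> t - \<Gamma> s) > 0" by auto
    then show "2 * (c\<^sup>2 * norm (cross3 (d1 \<Gamma> s) (\<Gamma> t - \<Gamma> s))) / (c * norm (d1 \<Gamma> s) * (c * norm (\<Gamma> t - \<Gamma> s))\<^sup>2) =
      2 * norm (cross3 (d1 \<Gamma> s) (\<Gamma> t - \<Gamma> s)) / (norm (d1 \<Gamma> s) * (norm (\<Gamma> t - \<Gamma> s))\<^sup>2) / c"
      using c by (simp add: field_simps power2_eq_square)
  qed
qed

lemma TP_scale: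
  assumes G: "\<Gamma> \<in> W22" and c: "c > 0"
  shows "tangent_point q (\<lambda>x. c *\<^sub>R \<Gamma> x) = c powr (2 - q) * tangent_point q \<Gamma>"
proof -
  have hd: "\<And>t. \<Gamma> differentiable (at t)" using G by (rule W22_diff)
  have cc: "c * c / c powr q = c powr (2 - q)"
    using c by (simp add: powr_diff powr_numeral power2_eq_square)
  have eq: "(\<lambda>(s, t). inv_rtp (\<lambda>x. c *\<^sub>R \<Gamma> x) s t powr q * norm (d1 (\<lambda>x. c *\<^sub>R \<Gamma> x) s) * norm (d1 (\<lambda>x. c *\<^sub>R \<Gamma> x) t))
      = (\<lambda>st. c powr (2 - q) * (\<lambda>(s, t). inv_rtp \<Gamma> s t powr q * norm (d1 \<Gamma> s) * norm (d1 \<Gamma> t)) st)"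
  proof
    fix st :: "real \<times> real"
    obtain s t where st: "st = (s, t)" by fastforce
    have "inv_rtp (\<lambda>x. c *\<^sub>R \<Gamma> x) s t powr q * norm (d1 (\<lambda>x. c *\<^sub>R \<Gamma> x) s) * norm (d1 (\<lambda>x. c *\<^sub>R \<Gamma> x) t)
        = (inv_rtp \<Gamma> s t powr q / c powr q) * (c * norm (d1 \<Gamma> s)) * (c * norm (d1 \<Gamma> t))"
      unfolding inv_rtp_scale[OF hd c] d1_scale[OF hd] powr_divide using c by simp
    also have "\<dots> = (c * c / c powr q) * (inv_rtp \<Gamma> s t powr q * norm (d1 \<Gamma> s) * norm (d1 \<Gamma> t))"
      by (simp add: field_simps)
    finally show "(\<lambda>(s, t). inv_rtp (\<lambda>x. c *\<^sub>R \<Gamma> x) s t powr q * norm (d1 (\<lambda>x. c *\<^sub>R \<Gamma> x) s) * norm (d1 (\<lambda>x. c *\<^sub>R \<Gamma> x) t)) st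
      = (\<lambda>st. c powr (2 - q) * (\<lambda>(s, t). inv_rtp \<Gamma> s t powr q * norm (d1 \<Gamma> s) * norm (d1 \<Gamma> t)) st) st"
      unfolding st cc by simp
  qed
  show ?thesis unfolding tangent_point_def eq
    by (rule Henstock_Kurzweil_Integration.integral_mult_right)
qed

lemma TP_nonneg: "0 \<le> tangent_point q \<Gamma>"
  unfolding tangent_point_def
  by (rule integral_nonneg_any) (auto simp: inv_rtp_def)

lemma E_scale:
  assumes q: "q > 2" and G: "\<Gamma> \<in> W22" and c: "c > 0"
  shows "E_theta q \<theta> (\<lambda>x. c *\<^sub>R \<Gamma> x) = E_theta q \<theta> \<Gamma> / c"
proof -
  have "(c powr (2 - q) * tangent_point q \<Gamma>) powr (1 / (q - 2))
      = (c powr (2 - q)) powr (1 / (q - 2)) * tangent_point q \<Gamma> powr (1 / (q - 2))"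
    by (rule powr_mult)
  also have "(c powr (2 - q)) powr (1 / (q - 2)) = c powr (- 1)"
  proof -
    have e: "(2 - q) * (1 / (q - 2)) = - 1" using q by (simp add: field_simps)
    show ?thesis unfolding powr_powr e ..
  qed
  also have "c powr (- 1) = 1 / c" using c by (rule powr_neg_one)
  finally have tp: "(c powr (2 - q) * tangent_point q \<Gamma>) powr (1 / (q - 2)) = tangent_point q \<Gamma> powr (1 / (q - 2)) / c"
    by simp
  show ?thesis unfolding E_theta_def bending_scale[OF G c] TP_scale[OF G c] tp
    by (simp add: add_divide_distrib)
qed

lemma E_dir:
  assumes q: "q > 2" and G: "\<Gamma> \<in> W22" and FA: "has_frechet_W22 (E_theta q \<theta>) \<Gamma> A"
  shows "A \<Gamma> = - E_theta q \<theta> \<Gamma>"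
proof (rule frechet_dir[OF FA G, of _ "2 * \<bar>E_theta q \<theta> \<Gamma>\<bar>"])
  fix t :: real assume t: "\<bar>t\<bar> < 1/2"
  define E where "E = E_theta q \<theta> \<Gamma>"
  have c: "1 + t > 0" using t by simp
  have eqf: "(\<lambda>x. \<Gamma> x + t *\<^sub>R \<Gamma> x) = (\<lambda>x. (1 + t) *\<^sub>R \<Gamma> x)" by (simp add: scaleR_add_left)
  have "E_theta q \<theta> (\<lambda>x. \<Gamma> x + t *\<^sub>R \<Gamma> x) - E - t * (- E) = E * t\<^sup>2 / (1 + t)"
    unfolding eqf E_scale[OF q G c] E_def[symmetric] using c by (simp add: field_simps power2_eq_square)
  also have "\<bar>\<dots>\<bar> \<le> 2 * \<bar>E\<bar> * t\<^sup>2"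
  proof -
    have "\<bar>E * t\<^sup>2 / (1 + t)\<bar> = \<bar>E\<bar> * t\<^sup>2 / (1 + t)" using c by (simp add: abs_mult)
    also have "\<dots> \<le> \<bar>E\<bar> * t\<^sup>2 / (1/2)"
      using t c by (intro divide_left_mono mult_nonneg_nonneg) auto
    finally show ?thesis by simp
  qed
  finally show "\<bar>E_theta q \<theta> (\<lambda>x. \<Gamma> x + t *\<^sub>R \<Gamma> x) - E_theta q \<theta> \<Gamma> - t * - E_theta q \<theta> \<Gamma>\<bar>
      \<le> 2 * \<bar>E_theta q \<theta> \<Gamma>\<bar> * t\<^sup>2" unfolding E_def .
qed

lemma L_dir:
  assumes G: "\<Gamma> \<in> W22" and FA: "has_frechet_W22 curve_length \<Gamma> A"
  shows "A \<Gamma> = curve_length \<Gamma>"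
proof (rule frechet_dir[OF FA G, of _ 0])
  fix t :: real assume t: "\<bar>t\<bar> < 1/2"
  have c: "1 + t > 0" using t by simp
  have eqf: "(\<lambda>x. \<Gamma> x + t *\<^sub>R \<Gamma> x) = (\<lambda>x. (1 + t) *\<^sub>R \<Gamma> x)" by (simp add: scaleR_add_left)
  show "\<bar>curve_length (\<lambda>x. \<Gamma> x + t *\<^sub>R \<Gamma> x) - curve_length \<Gamma> - t * curve_length \<Gamma>\<bar> \<le> 0 * t\<^sup>2"
    unfolding eqf L_scale[OF G c] by (simp add: algebra_simps)
qed


theorem corollary4p3:
  fixes q \<theta> :: real and \<Gamma> :: curve and K :: "curve set"
  assumes q: "2 < q" "q \<le> 4" and th: "\<theta> > 0"
    and irc: "injective_regular_closed \<Gamma>" and al: "arclength_param \<Gamma>"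
    and diffE: "frechet_differentiable_W22 (E_theta q \<theta>) \<Gamma>"
  shows "((\<exists>A. has_frechet_W22 (S_theta q \<theta>) \<Gamma> A \<and> (\<forall>h\<in>W22. A h = 0))
          \<longrightarrow> (\<forall>h\<in>W22. FD (E_theta q \<theta>) \<Gamma> h
                 + E_theta q \<theta> \<Gamma> * FD curve_length \<Gamma> h = 0))
       \<and> ((\<Gamma> \<in> admissible_class K \<and>
            (\<exists>\<mu>. \<forall>h\<in>W22. FD (E_theta q \<theta>) \<Gamma> h + \<mu> * FD curve_length \<Gamma> h = 0))
          \<longrightarrow> (\<forall>h\<in>W22. FD (E_theta q \<theta>) \<Gamma> h
                 + E_theta q \<theta> \<Gamma> * FD curve_length \<Gamma> h = 0))"
proof -
  have G: "\<Gamma> \<in> W22" using irc unfolding injective_regular_closed_def by simp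
  have L1: "curve_length \<Gamma> = 1" by (rule length_one[OF al])
  have FDL: "has_frechet_W22 curve_length \<Gamma> (FD curve_length \<Gamma>)"
    unfolding FD_def by (rule someI[where P="\<lambda>A. has_frechet_W22 curve_length \<Gamma> A", OF L_frechet[OF G al]])
  have FDE: "has_frechet_W22 (E_theta q \<theta>) \<Gamma> (FD (E_theta q \<theta>) \<Gamma>)"
    using diffE unfolding frechet_differentiable_W22_def FD_def by (rule someI_ex)
  have Seq: "S_theta q \<theta> = (\<lambda>c. curve_length c * E_theta q \<theta> c)"
    by (rule ext) (simp add: S_theta_def)
  have P: "has_frechet_W22 (S_theta q \<theta>) \<Gamma>
      (\<lambda>h. FD curve_length \<Gamma> h * E_theta q \<theta> \<Gamma> + curve_length \<Gamma> * FD (E_theta q \<theta>) \<Gamma> h)"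
    unfolding Seq by (rule frechet_mult[OF FDL FDE])
  have part1: "\<forall>h\<in>W22. FD (E_theta q \<theta>) \<Gamma> h + E_theta q \<theta> \<Gamma> * FD curve_length \<Gamma> h = 0"
    if ex: "\<exists>A. has_frechet_W22 (S_theta q \<theta>) \<Gamma> A \<and> (\<forall>h\<in>W22. A h = 0)"
  proof
    fix h assume h: "h \<in> W22"
    obtain A where A: "has_frechet_W22 (S_theta q \<theta>) \<Gamma> A" and A0: "\<forall>h\<in>W22. A h = 0"
      using ex by blast
    have "A h = FD curve_length \<Gamma> h * E_theta q \<theta> \<Gamma> + curve_length \<Gamma> * FD (E_theta q \<theta>) \<Gamma> h"
      using frechet_unique[OF A P h] .
    then show "FD (E_theta q \<theta>) \<Gamma> h + E_theta q \<theta> \<Gamma> * FD curve_length \<Gamma> h = 0"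
      using A0 h L1 by (simp add: algebra_simps)
  qed
  have part2: "\<forall>h\<in>W22. FD (E_theta q \<theta>) \<Gamma> h + E_theta q \<theta> \<Gamma> * FD curve_length \<Gamma> h = 0"
    if ex2: "\<Gamma> \<in> admissible_class K \<and> (\<exists>\<mu>. \<forall>h\<in>W22. FD (E_theta q \<theta>) \<Gamma> h + \<mu> * FD curve_length \<Gamma> h = 0)"
  proof -
    obtain \<mu> where mu: "\<forall>h\<in>W22. FD (E_theta q \<theta>) \<Gamma> h + \<mu> * FD curve_length \<Gamma> h = 0"
      using ex2 by blast
    have e1: "FD (E_theta q \<theta>) \<Gamma> \<Gamma> = - E_theta q \<theta> \<Gamma>" by (rule E_dir[OF q(1) G FDE])
    have e2: "FD curve_length \<Gamma> \<Gamma> = 1" using L_dir[OF G FDL] L1 by simp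
    have "\<mu> = E_theta q \<theta> \<Gamma>" using mu G e1 e2 by force
    then show ?thesis using mu by simp
  qed
  show ?thesis using part1 part2 by blast
qed

end
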